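(* Let $\Phi:\mathbb R^d\to\mathbb R$ have a unique minimizer $\theta^*$ and be twice continuously differentiable near $\theta^*$ with positive definite Hessian $\nabla^2\Phi(\theta^* )$ having eigenvalues $0<\lambda_1\le\cdots\le\lambda_d$. Let $\Gamma\in\mathbb R^{d\times d}$ be a symmetric positive semi-definite matrix (the covariance matrix $\mathbb E[g(X_1,\theta^* )g(X_1,\theta^* )^\top]$ of the stochastic gradient at $\theta^*$), and let $\delta>1/\lambda_1$. Define $$\Sigma=\delta\int_0^\infty e^{t/\delta}e^{-t\nabla^2\Phi(\theta^* )}\Gamma e^{-t\nabla^2\Phi(\theta^* )}\,dt,\qquad \Delta=\nabla^2\Phi(\theta^* )^{-1}\Gamma\,\nabla^2\Phi(\theta^* )^{-1}.$$ Then $\Sigma-\Delta$ is positive semi-definite and $$\|\Sigma-\Delta\|_{\mathrm{op}}\le\frac{(\delta\lambda_d-1)^2}{2\delta\lambda_d-1}\|\Delta\|_{\mathrm{op}}.$$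
   Context: $\|M\|_{\mathrm{op}}$ is the operator norm of a symmetric matrix $M$, i.e. its largest eigenvalue in absolute value. *)

theory Defs
  imports "HOL-Analysis.Analysis"
begin

primrec matpow :: "real^'n^'n \<Rightarrow> nat \<Rightarrow> real^'n^'n" where
  "matpow A 0 = mat 1"
| "matpow A (Suc k) = A ** matpow A k"

definition mexp :: "real^'n^'n \<Rightarrow> real^'n^'n" where
  "mexp A = (\<Sum>k. (1 / fact k) *\<^sub>R matpow A k)"

definition eigenvalues :: "real^'n^'n \<Rightarrow> real set" where
  "eigenvalues M = {c. \<exists>v. v \<noteq> 0 \<and> M *v v = c *\<^sub>R v}"

text \<open>Operator norm of a symmetric matrix: largest eigenvalue in absolute value.\<close>

definition opnorm :: "real^'n^'n \<Rightarrow> real" where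
  "opnorm M = Max ((\<lambda>c. \<bar>c\<bar>) ` eigenvalues M)"

definition psd :: "real^'n^'n \<Rightarrow> bool" where
  "psd M \<longleftrightarrow> transpose M = M \<and> (\<forall>x. 0 \<le> x \<bullet> (M *v x))"

definition posdef :: "real^'n^'n \<Rightarrow> bool" where
  "posdef M \<longleftrightarrow> transpose M = M \<and> (\<forall>x. x \<noteq> 0 \<longrightarrow> 0 < x \<bullet> (M *v x))"

definition C2_near_with_hessian :: "(real^'n \<Rightarrow> real) \<Rightarrow> real^'n \<Rightarrow> real^'n^'n \<Rightarrow> bool" where
  "C2_near_with_hessian \<Phi> \<theta> H \<longleftrightarrow>
     (\<exists>e>0. \<exists>g :: real^'n \<Rightarrow> real^'n. \<exists>Hf :: real^'n \<Rightarrow> real^'n^'n.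
        (\<forall>x\<in>ball \<theta> e. (\<Phi> has_derivative (\<lambda>h. g x \<bullet> h)) (at x)
                        \<and> (g has_derivative (\<lambda>h. Hf x *v h)) (at x))
        \<and> continuous_on (ball \<theta> e) Hf \<and> Hf \<theta> = H)"

end

theory Submission
  imports Defs
begin


lemma sym_inner:
  fixes A :: "real^'n^'n"
  assumes "transpose A = A"
  shows "x \<bullet> (A *v y) = (A *v x) \<bullet> y"
proof -
  have "x \<bullet> (A *v y) = (x v* A) \<bullet> y" by (simp add: dot_lmul_matrix)
  also have "x v* A = A *v x" by (metis assms vector_transpose_matrix)
  finally show ?thesis .
qed

lemma lin_quad_nonpos:
  fixes a b :: real
  assumes "\<forall>t. a * t + b * t^2 \<le> 0"
  shows "a = 0"
proof (rule ccontr)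
  assume "a \<noteq> 0"
  define d where "d = \<bar>b\<bar> + 1"
  define t where "t = a / d"
  have pos: "d > 0" unfolding d_def by simp
  have "a * t - \<bar>b\<bar> * t^2 \<le> a * t + b * t^2"
    using mult_right_mono[of "-\<bar>b\<bar>" b "t^2"] by simp
  moreover have "a * t - \<bar>b\<bar> * t^2 = a^2 / d^2"
  proof -
    have gd: "d \<noteq> 0 \<Longrightarrow> a*(a/d) - (d-1)*(a/d)^2 = (a^2)/d^2" for d :: real
      by (simp add: field_simps power2_eq_square)
    show ?thesis using gd[of d] pos unfolding t_def d_def by simp
  qed
  moreover have "a^2 / d^2 > 0" using \<open>a \<noteq> 0\<close> pos by simp
  ultimately show False using assms[rule_format, of t] by linarith
qed

lemma sym_eigvec_in_subspace:
  fixes A :: "real^'n^'n"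
  assumes sym: "transpose A = A" and W: "subspace W"
    and inv: "\<And>w. w \<in> W \<Longrightarrow> A *v w \<in> W" and r: "r \<in> W" "r \<noteq> 0"
  shows "\<exists>v\<in>W. norm v = 1 \<and> A *v v = (v \<bullet> (A *v v)) *\<^sub>R v"
proof -
  let ?K = "W \<inter> sphere 0 1"
  have "compact ?K"
    using W closed_subspace compact_sphere closed_Int_compact by blast
  moreover have "r /\<^sub>R norm r \<in> ?K" using r W by (simp add: subspace_scale)
  hence "?K \<noteq> {}" by blast
  moreover have "continuous_on ?K (\<lambda>w. w \<bullet> (A *v w))"
    by (intro continuous_intros matrix_vector_mult_linear_continuous_on)
  ultimately have "\<exists>x\<in>?K. \<forall>y\<in>?K. y \<bullet> (A *v y) \<le> x \<bullet> (A *v x)"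
    by (rule continuous_attains_sup)
  then obtain v where v: "v \<in> ?K" and vmax: "\<And>y. y \<in> ?K \<Longrightarrow> y \<bullet> (A *v y) \<le> v \<bullet> (A *v v)"
    by blast
  define \<mu> where "\<mu> = v \<bullet> (A *v v)"
  have nv: "norm v = 1" "v \<in> W" using v by auto
  have vv: "v \<bullet> v = 1" using nv by (simp add: dot_square_norm)
  have key: "w \<bullet> (A *v v) - \<mu> * (v \<bullet> w) = 0" if w: "w \<in> W" for w
  proof -
    have "\<forall>t. 2 * (w \<bullet> (A *v v) - \<mu> * (v \<bullet> w)) * t + (w \<bullet> (A *v w) - \<mu> * (w \<bullet> w)) * t^2 \<le> 0"
    proof
      fix t :: real
      let ?u = "v + t *\<^sub>R w"
      have uW: "?u \<in> W" using W w nv by (simp add: subspace_add subspace_scale)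
      have le: "?u \<bullet> (A *v ?u) \<le> \<mu> * (?u \<bullet> ?u)"
      proof (cases "?u = 0")
        case True then show ?thesis by simp
      next
        case False
        have "?u /\<^sub>R norm ?u \<in> ?K" using uW False W by (simp add: subspace_scale)
        hence "(?u /\<^sub>R norm ?u) \<bullet> (A *v (?u /\<^sub>R norm ?u)) \<le> \<mu>" using vmax \<mu>_def by blast
        hence "(?u \<bullet> (A *v ?u)) / (norm ?u)^2 \<le> \<mu>"
          by (simp add: matrix_vector_mult_scaleR power2_eq_square divide_inverse mult.commute mult.left_commute)
        moreover have "(norm ?u)^2 > 0" using False by simp
        ultimately show ?thesis by (simp add: dot_square_norm divide_le_eq mult.commute)
      qed
      have s: "v \<bullet> (A *v w) = w \<bullet> (A *v v)"
        using sym_inner[OF sym, of v w] by (simp add: inner_commute)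
      have e1: "?u \<bullet> (A *v ?u) = \<mu> + 2 * t * (w \<bullet> (A *v v)) + t^2 * (w \<bullet> (A *v w))"
        using s unfolding \<mu>_def
        by (simp add: matrix_vector_right_distrib matrix_vector_mult_scaleR inner_add_left inner_add_right power2_eq_square algebra_simps)
      have e2: "?u \<bullet> ?u = 1 + 2 * t * (v \<bullet> w) + t^2 * (w \<bullet> w)"
        using vv by (simp add: inner_add_left inner_add_right power2_eq_square algebra_simps inner_commute)
      show "2 * (w \<bullet> (A *v v) - \<mu> * (v \<bullet> w)) * t + (w \<bullet> (A *v w) - \<mu> * (w \<bullet> w)) * t^2 \<le> 0"
        using le unfolding e1 e2 by (simp add: algebra_simps)
    qed
    from lin_quad_nonpos[OF this] show ?thesis by simp
  qed
  define w where "w = A *v v - \<mu> *\<^sub>R v"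
  have "w \<in> W" unfolding w_def using inv nv W by (simp add: subspace_diff subspace_scale)
  from key[OF this] have "w \<bullet> w = 0"
    unfolding w_def by (simp add: inner_diff_left inner_diff_right inner_commute algebra_simps)
  hence "w = 0" by simp
  thus ?thesis using nv unfolding w_def \<mu>_def by (intro bexI[of _ v]) auto
qed


definition eigsys :: "real^'n^'n \<Rightarrow> (real^'n) set \<Rightarrow> bool" where
  "eigsys A B \<longleftrightarrow> (\<forall>b\<in>B. norm b = 1 \<and> A *v b = (b \<bullet> (A *v b)) *\<^sub>R b) \<and> pairwise orthogonal B"

lemma eigsys_norm: "eigsys A B \<Longrightarrow> b \<in> B \<Longrightarrow> norm b = 1"
  unfolding eigsys_def by blast

lemma eigsys_orth: "eigsys A B \<Longrightarrow> b \<in> B \<Longrightarrow> c \<in> B \<Longrightarrow> b \<noteq> c \<Longrightarrow> b \<bullet> c = 0"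
  unfolding eigsys_def pairwise_def orthogonal_def by blast

lemma eigsys_eig: "eigsys A B \<Longrightarrow> b \<in> B \<Longrightarrow> A *v b = (b \<bullet> (A *v b)) *\<^sub>R b"
  unfolding eigsys_def by blast

lemma eigsys_fin:
  fixes A :: "real^'n^'n"
  assumes "eigsys A B" shows "finite B \<and> card B \<le> DIM(real^'n)"
proof -
  have z: "0 \<notin> B" using eigsys_norm[OF assms, of 0] by auto
  have "pairwise orthogonal B" using assms unfolding eigsys_def by (rule conjunct2)
  hence "independent B" using z by (rule pairwise_orthogonal_independent)
  from independent_bound[OF this] show ?thesis .
qed

lemma orth_coeff:
  assumes "eigsys A B" "c \<in> B"
  shows "c \<bullet> (\<Sum>b\<in>B. f b *\<^sub>R b) = f c"
proof -
  have fin: "finite B" using eigsys_fin[OF assms(1)] by blast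
  have "c \<bullet> (\<Sum>b\<in>B. f b *\<^sub>R b) = (\<Sum>b\<in>B. f b * (c \<bullet> b))"
    by (simp add: inner_sum_right)
  also have "\<dots> = (\<Sum>b\<in>B. if b = c then f c else 0)"
  proof (rule sum.cong)
    fix b assume b: "b \<in> B"
    show "f b * (c \<bullet> b) = (if b = c then f c else 0)"
    proof (cases "b = c")
      case True
      then show ?thesis using eigsys_norm[OF assms(1) b] by (simp add: dot_square_norm)
    next
      case False
      then show ?thesis using eigsys_orth[OF assms(1) b assms(2)] by (simp add: inner_commute)
    qed
  qed simp
  also have "\<dots> = f c" using fin assms(2) by simp
  finally show ?thesis .
qed

lemma spectral:
  fixes A :: "real^'n^'n"
  assumes sym: "transpose A = A"
  shows "\<exists>B. eigsys A B \<and> finite B \<and> B \<noteq> {} \<and> (\<forall>x. x = (\<Sum>b\<in>B. (b \<bullet> x) *\<^sub>R b))"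
proof -
  have "\<exists>k. (\<exists>B. eigsys A B \<and> card B = k) \<and> (\<forall>y. (\<exists>B. eigsys A B \<and> card B = y) \<longrightarrow> y \<le> k)"
    apply (rule ex_has_greatest_nat[where k=0 and b="Suc DIM(real^'n)"])
     apply (rule exI[of _ "{}"], simp add: eigsys_def)
    using eigsys_fin[of A] by (metis le_imp_less_Suc)
  then obtain B where B: "eigsys A B" and maxB: "\<And>B'. eigsys A B' \<Longrightarrow> card B' \<le> card B"
    by blast
  have fin: "finite B" using eigsys_fin[OF B] by blast
  have exp: "x = (\<Sum>b\<in>B. (b \<bullet> x) *\<^sub>R b)" for x
  proof (rule ccontr)
    assume ne: "x \<noteq> (\<Sum>b\<in>B. (b \<bullet> x) *\<^sub>R b)"
    define r where "r = x - (\<Sum>b\<in>B. (b \<bullet> x) *\<^sub>R b)"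
    define W where "W = {w. \<forall>b\<in>B. b \<bullet> w = 0}"
    have rW: "r \<in> W" unfolding W_def r_def
      using orth_coeff[OF B] by (simp add: inner_diff_right)
    have r0: "r \<noteq> 0" using ne unfolding r_def by simp
    have subW: "subspace W" unfolding W_def subspace_def
      by (auto simp: inner_add_right inner_scaleR_right)
    have invW: "A *v w \<in> W" if "w \<in> W" for w
    proof -
      have "b \<bullet> (A *v w) = 0" if b: "b \<in> B" for b
      proof -
        have "b \<bullet> (A *v w) = (A *v b) \<bullet> w" by (rule sym_inner[OF sym])
        also have "\<dots> = (b \<bullet> (A *v b)) * (b \<bullet> w)"
          using eigsys_eig[OF B b] by (metis inner_scaleR_left)
        also have "\<dots> = 0" using \<open>w \<in> W\<close> b unfolding W_def by simp
        finally show ?thesis .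
      qed
      thus ?thesis unfolding W_def by blast
    qed
    obtain v where v: "v \<in> W" "norm v = 1" "A *v v = (v \<bullet> (A *v v)) *\<^sub>R v"
      using sym_eigvec_in_subspace[OF sym subW invW rW r0] by blast
    have vB: "v \<notin> B"
    proof
      assume "v \<in> B"
      hence "v \<bullet> v = 0" using v(1) unfolding W_def by blast
      thus False using v(2) by simp
    qed
    have "pairwise orthogonal (insert v B)"
    proof -
      have "pairwise orthogonal B" using B unfolding eigsys_def by blast
      thus ?thesis using v(1) unfolding W_def pairwise_insert orthogonal_def
        by (auto simp: inner_commute)
    qed
    moreover have "\<forall>b\<in>insert v B. norm b = 1 \<and> A *v b = (b \<bullet> (A *v b)) *\<^sub>R b"
      using v(2,3) eigsys_norm[OF B] eigsys_eig[OF B] by blast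
    ultimately have "eigsys A (insert v B)" unfolding eigsys_def by blast
    from maxB[OF this] show False using fin vB by simp
  qed
  have "B \<noteq> {}"
  proof
    assume "B = {}"
    hence "(vec 1 :: real^'n) = 0" using exp[of "vec 1"] by simp
    thus False by (simp add: vec_eq_iff)
  qed
  thus ?thesis using B fin exp by blast
qed


lemma mv_sum: "(A::real^'n^'m) *v (\<Sum>i\<in>I. f i) = (\<Sum>i\<in>I. A *v f i)"
  by (induction I rule: infinite_finite_induct) (auto simp: matrix_vector_right_distrib)

lemma sum_mv: "(\<Sum>i\<in>I. M i) *v (x::real^'n) = (\<Sum>i\<in>I. (M i :: real^'n^'m) *v x)"
  by (induction I rule: infinite_finite_induct) (auto simp: matrix_vector_mult_add_rdistrib)

lemma scaleR_mv: "(c *\<^sub>R (A::real^'n^'m)) *v x = c *\<^sub>R (A *v x)"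
  by (simp add: scaleR_matrix_vector_assoc)

definition outer :: "real^'n \<Rightarrow> real^'n^'n" where
  "outer b = (\<chi> i j. b$i * b$j)"

lemma outer_mv: "outer b *v x = (b \<bullet> x) *\<^sub>R b"
  by (simp add: outer_def vec_eq_iff matrix_vector_mult_def inner_vec_def sum_distrib_left
      sum_distrib_right mult_ac)

lemma inner_eq_sym_transpose:
  fixes M :: "real^'n^'n"
  assumes "\<And>x y. x \<bullet> (M *v y) = y \<bullet> (M *v x)"
  shows "transpose M = M"
proof -
  have "transpose M *v y = M *v y" for y
  proof -
    have "x \<bullet> (transpose M *v y - M *v y) = 0" for x
    proof -
      have "x \<bullet> (transpose M *v y) = (x v* transpose M) \<bullet> y" by (simp only: dot_lmul_matrix)
      also have "\<dots> = (M *v x) \<bullet> y" by simp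
      also have "\<dots> = x \<bullet> (M *v y)" using assms[of y x] by (simp add: inner_commute)
      finally show ?thesis by (simp add: inner_diff_right)
    qed
    from this[of "transpose M *v y - M *v y"] show ?thesis by simp
  qed
  thus ?thesis by (simp add: matrix_eq)
qed

definition espec :: "real^'n^'n \<Rightarrow> (real^'n) set \<Rightarrow> bool" where
  "espec A B \<longleftrightarrow> eigsys A B \<and> finite B \<and> B \<noteq> {} \<and> (\<forall>x. x = (\<Sum>b\<in>B. (b \<bullet> x) *\<^sub>R b))"

lemma spectral':
  fixes A :: "real^'n^'n"
  assumes "transpose A = A" shows "\<exists>B. espec A B"
  using spectral[OF assms] unfolding espec_def by blast

context
  fixes A :: "real^'n^'n" and B
  assumes E: "espec A B"
begin

lemma es_fin: "finite B" and es_ne: "B \<noteq> {}" and es_sys: "eigsys A B"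
  and es_exp: "x = (\<Sum>b\<in>B. (b \<bullet> x) *\<^sub>R b)"
  using E unfolding espec_def by blast+

lemma es_eig: "b \<in> B \<Longrightarrow> A *v b = (b \<bullet> (A *v b)) *\<^sub>R b"
  and es_norm: "b \<in> B \<Longrightarrow> norm b = 1"
  using eigsys_eig[OF es_sys] eigsys_norm[OF es_sys] by blast+

lemma es_exp': "(\<Sum>b\<in>B. (b \<bullet> x) *\<^sub>R b) = x"
  using es_exp[of x] by (rule sym)

lemma es_eig_scale: "b \<in> B \<Longrightarrow> c *\<^sub>R (A *v b) = (c * (b \<bullet> (A *v b))) *\<^sub>R b"
proof -
  assume b: "b \<in> B"
  have "c *\<^sub>R (A *v b) = c *\<^sub>R ((b \<bullet> (A *v b)) *\<^sub>R b)" by (rule arg_cong[OF es_eig[OF b]])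
  thus ?thesis by simp
qed

lemma es_coeff: "c \<in> B \<Longrightarrow> c \<bullet> (\<Sum>b\<in>B. f b *\<^sub>R b) = f c"
  using orth_coeff[OF es_sys] .

lemma es_apply: "A *v x = (\<Sum>b\<in>B. ((b \<bullet> (A *v b)) * (b \<bullet> x)) *\<^sub>R b)"
proof -
  have "A *v x = A *v (\<Sum>b\<in>B. (b \<bullet> x) *\<^sub>R b)" by (simp only: es_exp')
  also have "\<dots> = (\<Sum>b\<in>B. (b \<bullet> x) *\<^sub>R (A *v b))"
    by (simp add: mv_sum matrix_vector_mult_scaleR)
  also have "\<dots> = (\<Sum>b\<in>B. ((b \<bullet> (A *v b)) * (b \<bullet> x)) *\<^sub>R b)"
    by (rule sum.cong) (auto simp: es_eig_scale mult.commute)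
  finally show ?thesis .
qed

lemma es_inner_sum: "(\<Sum>b\<in>B. f b *\<^sub>R b) \<bullet> (\<Sum>b\<in>B. g b *\<^sub>R b) = (\<Sum>b\<in>B. f b * g b)"
  by (simp add: inner_sum_left es_coeff)

lemma es_parseval: "x \<bullet> x = (\<Sum>b\<in>B. (b \<bullet> x)^2)"
proof -
  have "x \<bullet> x = (\<Sum>b\<in>B. (b \<bullet> x) *\<^sub>R b) \<bullet> (\<Sum>b\<in>B. (b \<bullet> x) *\<^sub>R b)"
    by (simp only: es_exp')
  also have "\<dots> = (\<Sum>b\<in>B. (b \<bullet> x)^2)" by (simp add: es_inner_sum power2_eq_square)
  finally show ?thesis .
qed

lemma es_quad: "x \<bullet> (A *v x) = (\<Sum>b\<in>B. (b \<bullet> (A *v b)) * (b \<bullet> x)^2)"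
proof -
  have "x \<bullet> (A *v x) = (\<Sum>b\<in>B. (b \<bullet> x) *\<^sub>R b) \<bullet> (\<Sum>b\<in>B. ((b \<bullet> (A *v b)) * (b \<bullet> x)) *\<^sub>R b)"
    using es_apply[of x] by (simp only: es_exp')
  also have "\<dots> = (\<Sum>b\<in>B. (b \<bullet> (A *v b)) * (b \<bullet> x)^2)"
    by (simp add: es_inner_sum power2_eq_square mult_ac)
  finally show ?thesis .
qed

lemma es_eigenvalues: "eigenvalues A = (\<lambda>b. b \<bullet> (A *v b)) ` B"
proof
  show "(\<lambda>b. b \<bullet> (A *v b)) ` B \<subseteq> eigenvalues A"
  proof
    fix c assume "c \<in> (\<lambda>b. b \<bullet> (A *v b)) ` B"
    then obtain b where b: "b \<in> B" "c = b \<bullet> (A *v b)" by blast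
    have "b \<noteq> 0" using es_norm[OF b(1)] by auto
    moreover have "A *v b = c *\<^sub>R b" using es_eig[OF b(1)] b(2) by metis
    ultimately show "c \<in> eigenvalues A" unfolding eigenvalues_def by blast
  qed
next
  show "eigenvalues A \<subseteq> (\<lambda>b. b \<bullet> (A *v b)) ` B"
  proof
    fix c assume "c \<in> eigenvalues A"
    then obtain v where v: "v \<noteq> 0" "A *v v = c *\<^sub>R v" unfolding eigenvalues_def by blast
    have "\<exists>b\<in>B. b \<bullet> v \<noteq> 0"
    proof (rule ccontr)
      assume "\<not> ?thesis"
      hence "v = 0" using es_exp'[of v] by simp
      thus False using v by simp
    qed
    then obtain b where b: "b \<in> B" "b \<bullet> v \<noteq> 0" by blast
    have "b \<bullet> (A *v v) = (b \<bullet> (A *v b)) * (b \<bullet> v)"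
      using es_apply[of v] es_coeff[OF b(1)] by simp
    moreover have "b \<bullet> (A *v v) = c * (b \<bullet> v)" using v by simp
    ultimately have "c = b \<bullet> (A *v b)" using b(2) by simp
    thus "c \<in> (\<lambda>b. b \<bullet> (A *v b)) ` B" using b by blast
  qed
qed

lemma es_opnorm: "opnorm A = Max ((\<lambda>b. \<bar>b \<bullet> (A *v b)\<bar>) ` B)"
  unfolding opnorm_def es_eigenvalues image_image ..

lemma es_opnorm_ge: "b \<in> B \<Longrightarrow> \<bar>b \<bullet> (A *v b)\<bar> \<le> opnorm A"
  unfolding es_opnorm using es_fin by simp

lemma es_opnorm_nonneg: "0 \<le> opnorm A"
  using es_ne es_opnorm_ge by force

lemma es_rayleigh: "x \<bullet> (A *v x) \<le> opnorm A * (x \<bullet> x)"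
proof -
  have "x \<bullet> (A *v x) = (\<Sum>b\<in>B. (b \<bullet> (A *v b)) * (b \<bullet> x)^2)" by (rule es_quad)
  also have "\<dots> \<le> (\<Sum>b\<in>B. opnorm A * (b \<bullet> x)^2)"
  proof (rule sum_mono)
    fix b assume "b \<in> B"
    hence "b \<bullet> (A *v b) \<le> opnorm A" using es_opnorm_ge by force
    thus "(b \<bullet> (A *v b)) * (b \<bullet> x)^2 \<le> opnorm A * (b \<bullet> x)^2"
      by (simp add: mult_right_mono)
  qed
  also have "\<dots> = opnorm A * (x \<bullet> x)" by (simp add: es_parseval sum_distrib_left)
  finally show ?thesis .
qed

lemma es_opnorm_attained: "\<exists>b\<in>B. norm b = 1 \<and> opnorm A = \<bar>b \<bullet> (A *v b)\<bar>"
proof -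
  have "Max ((\<lambda>b. \<bar>b \<bullet> (A *v b)\<bar>) ` B) \<in> (\<lambda>b. \<bar>b \<bullet> (A *v b)\<bar>) ` B"
    using es_fin es_ne by (intro Max_in) auto
  thus ?thesis using es_norm unfolding es_opnorm by auto
qed

end


context
  fixes A :: "real^'n^'n" and B
  assumes E: "espec A B"
begin

lemma es_sum_outer_mv: "(\<Sum>b\<in>B. f b *\<^sub>R outer b) *v x = (\<Sum>b\<in>B. (f b * (b \<bullet> x)) *\<^sub>R b)"
  by (simp add: sum_mv scaleR_mv outer_mv)

lemma es_matpow: "matpow (s *\<^sub>R A) k = (\<Sum>b\<in>B. ((s * (b \<bullet> (A *v b)))^k) *\<^sub>R outer b)"
proof (induction k)
  case 0
  show ?case unfolding matrix_eq
  proof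
    fix x
    have "(\<Sum>b\<in>B. ((s * (b \<bullet> (A *v b)))^0) *\<^sub>R outer b) *v x = (\<Sum>b\<in>B. ((s * (b \<bullet> (A *v b)))^0 * (b \<bullet> x)) *\<^sub>R b)"
      by (rule es_sum_outer_mv)
    also have "\<dots> = x" by (simp add: es_exp'[OF E])
    finally show "matpow (s *\<^sub>R A) 0 *v x = (\<Sum>b\<in>B. ((s * (b \<bullet> (A *v b)))^0) *\<^sub>R outer b) *v x" by simp
  qed
next
  case (Suc k)
  show ?case unfolding matrix_eq
  proof
    fix x
    have "matpow (s *\<^sub>R A) (Suc k) *v x = (s *\<^sub>R A) *v (matpow (s *\<^sub>R A) k *v x)"
      by (simp add: matrix_vector_mul_assoc)
    also have "\<dots> = (\<Sum>b\<in>B. (((s * (b \<bullet> (A *v b)))^k) * (b \<bullet> x)) *\<^sub>R (s *\<^sub>R (A *v b)))"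
      unfolding Suc es_sum_outer_mv by (simp add: mv_sum scaleR_mv matrix_vector_mult_scaleR)
    also have "\<dots> = (\<Sum>b\<in>B. (((s * (b \<bullet> (A *v b)))^Suc k) * (b \<bullet> x)) *\<^sub>R b)"
      by (rule sum.cong) (auto simp: es_eig_scale[OF E] mult_ac)
    also have "\<dots> = (\<Sum>b\<in>B. ((s * (b \<bullet> (A *v b)))^Suc k) *\<^sub>R outer b) *v x"
      by (simp add: es_sum_outer_mv)
    finally show "matpow (s *\<^sub>R A) (Suc k) *v x = (\<Sum>b\<in>B. ((s * (b \<bullet> (A *v b)))^Suc k) *\<^sub>R outer b) *v x" .
  qed
qed

lemma es_mexp: "mexp (s *\<^sub>R A) = (\<Sum>b\<in>B. exp (s * (b \<bullet> (A *v b))) *\<^sub>R outer b)"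
proof -
  have "(\<lambda>k. (1 / fact k) *\<^sub>R matpow (s *\<^sub>R A) k) =
        (\<lambda>k. \<Sum>b\<in>B. ((s * (b \<bullet> (A *v b)))^k /\<^sub>R fact k) *\<^sub>R outer b)"
    by (intro ext) (simp add: es_matpow scaleR_sum_right divide_inverse mult.commute)
  moreover have "(\<lambda>k. \<Sum>b\<in>B. ((s * (b \<bullet> (A *v b)))^k /\<^sub>R fact k) *\<^sub>R outer b) sums
        (\<Sum>b\<in>B. exp (s * (b \<bullet> (A *v b))) *\<^sub>R outer b)"
    by (intro sums_sum sums_scaleR_left exp_converges)
  ultimately show ?thesis unfolding mexp_def by (simp add: sums_iff)
qed

end


lemma T_mv: "(outer b ** G ** outer c) *v x = ((c \<bullet> x) * (b \<bullet> (G *v c))) *\<^sub>R b"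
  by (simp add: matrix_vector_mul_assoc[symmetric] outer_mv matrix_vector_mult_scaleR)

context
  fixes A :: "real^'n^'n" and B
  assumes E: "espec A B"
begin

lemma es_sandwich:
  "(\<Sum>b\<in>B. f b *\<^sub>R outer b) ** G ** (\<Sum>b\<in>B. f b *\<^sub>R outer b)
     = (\<Sum>b\<in>B. \<Sum>c\<in>B. (f b * f c) *\<^sub>R (outer b ** G ** outer c))"
  unfolding matrix_eq
proof
  fix x
  let ?M = "(\<Sum>b\<in>B. f b *\<^sub>R outer b)"
  have "(?M ** G ** ?M) *v x = ?M *v (G *v (?M *v x))"
    by (simp add: matrix_vector_mul_assoc matrix_mul_assoc)
  also have "\<dots> = (\<Sum>c\<in>B. (f c * (c \<bullet> x)) *\<^sub>R (\<Sum>b\<in>B. (f b * (b \<bullet> (G *v c))) *\<^sub>R b))"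
    by (simp add: es_sum_outer_mv[OF E] mv_sum matrix_vector_mult_scaleR)
  also have "\<dots> = (\<Sum>c\<in>B. \<Sum>b\<in>B. (f b * f c * ((c \<bullet> x) * (b \<bullet> (G *v c)))) *\<^sub>R b)"
    by (simp add: scaleR_sum_right mult_ac)
  also have "\<dots> = (\<Sum>b\<in>B. \<Sum>c\<in>B. (f b * f c * ((c \<bullet> x) * (b \<bullet> (G *v c)))) *\<^sub>R b)"
    by (rule sum.swap)
  also have "\<dots> = (\<Sum>b\<in>B. \<Sum>c\<in>B. (f b * f c) *\<^sub>R (outer b ** G ** outer c)) *v x"
    by (simp add: sum_mv scaleR_mv T_mv)
  finally show "(?M ** G ** ?M) *v x = (\<Sum>b\<in>B. \<Sum>c\<in>B. (f b * f c) *\<^sub>R (outer b ** G ** outer c)) *v x" .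
qed

lemma es_integral:
  fixes \<delta> :: real
  assumes pos: "\<And>b. b \<in> B \<Longrightarrow> 1 < \<delta> * (b \<bullet> (A *v b))" and d: "\<delta> > 0"
  shows "((\<lambda>t. exp (t / \<delta>) *\<^sub>R (mexp (- (t *\<^sub>R A)) ** G ** mexp (- (t *\<^sub>R A)))) has_integral
     (\<Sum>b\<in>B. \<Sum>c\<in>B. (1 / ((b \<bullet> (A *v b)) + (c \<bullet> (A *v c)) - 1 / \<delta>)) *\<^sub>R (outer b ** G ** outer c))) {0..}"
proof -
  let ?l = "\<lambda>b. b \<bullet> (A *v b)"
  have fe: "(\<lambda>t. exp (t / \<delta>) *\<^sub>R (mexp (- (t *\<^sub>R A)) ** G ** mexp (- (t *\<^sub>R A)))) =
     (\<lambda>t. \<Sum>b\<in>B. \<Sum>c\<in>B. exp (- (?l b + ?l c - 1 / \<delta>) * t) *\<^sub>R (outer b ** G ** outer c))"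
  proof
    fix t
    have m: "- (t *\<^sub>R A) = (-t) *\<^sub>R A" by simp
    have "exp (t / \<delta>) *\<^sub>R (mexp (- (t *\<^sub>R A)) ** G ** mexp (- (t *\<^sub>R A))) =
      (\<Sum>b\<in>B. \<Sum>c\<in>B. (exp (t / \<delta>) * (exp (- t * ?l b) * exp (- t * ?l c))) *\<^sub>R (outer b ** G ** outer c))"
      unfolding m es_mexp[OF E] es_sandwich by (simp add: scaleR_sum_right)
    also have "\<dots> = (\<Sum>b\<in>B. \<Sum>c\<in>B. exp (- (?l b + ?l c - 1 / \<delta>) * t) *\<^sub>R (outer b ** G ** outer c))"
      by (intro sum.cong refl) (simp add: exp_add[symmetric] algebra_simps)
    finally show "exp (t / \<delta>) *\<^sub>R (mexp (- (t *\<^sub>R A)) ** G ** mexp (- (t *\<^sub>R A))) =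
      (\<Sum>b\<in>B. \<Sum>c\<in>B. exp (- (?l b + ?l c - 1 / \<delta>) * t) *\<^sub>R (outer b ** G ** outer c))" .
  qed
  have lpos: "b \<in> B \<Longrightarrow> 1 / \<delta> < ?l b" for b
    using pos[of b] d by (simp add: field_simps mult.commute)
  have "((\<lambda>t. \<Sum>b\<in>B. \<Sum>c\<in>B. exp (- (?l b + ?l c - 1 / \<delta>) * t) *\<^sub>R (outer b ** G ** outer c)) has_integral
     (\<Sum>b\<in>B. \<Sum>c\<in>B. (1 / (?l b + ?l c - 1 / \<delta>)) *\<^sub>R (outer b ** G ** outer c))) {0..}"
  proof (intro has_integral_sum es_fin[OF E] has_integral_scaleR_left)
    fix b c assume "b \<in> B" "c \<in> B"
    hence "?l b + ?l c - 1 / \<delta> > 0" using lpos[of b] lpos[of c] d by (smt (verit) divide_pos_pos)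
    from has_integral_exp_minus_to_infinity[OF this, of 0]
    show "((\<lambda>t. exp (- (?l b + ?l c - 1 / \<delta>) * t)) has_integral (1 / (?l b + ?l c - 1 / \<delta>))) {0..}"
      by simp
  qed
  thus ?thesis unfolding fe .
qed

end


lemma bilin:
  "(\<Sum>b\<in>B. u b *\<^sub>R b) \<bullet> ((G::real^'n^'n) *v (\<Sum>c\<in>C. v c *\<^sub>R c)) =
   (\<Sum>b\<in>B. \<Sum>c\<in>C. u b * v c * (b \<bullet> (G *v c)))"
  unfolding inner_sum_left by (simp add: mv_sum matrix_vector_mult_scaleR inner_sum_right sum_distrib_left mult_ac)

context
  fixes H G Hi :: "real^'n^'n" and B and \<delta> :: real
  assumes E: "espec H B"
    and Gsym: "transpose G = G" and Gpsd: "\<And>x. 0 \<le> x \<bullet> (G *v x)"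
    and pos: "\<And>b. b \<in> B \<Longrightarrow> 1 < \<delta> * (b \<bullet> (H *v b))" and d: "\<delta> > 0"
    and Hi1: "H ** Hi = mat 1" and Hi2: "Hi ** H = mat 1"
begin

abbreviation l where "l b \<equiv> b \<bullet> (H *v b)"

lemma lpos: "b \<in> B \<Longrightarrow> 0 < l b"
proof -
  assume b: "b \<in> B"
  have "0 < \<delta> * l b" using pos[OF b] by simp
  thus ?thesis using d by (simp add: zero_less_mult_iff)
qed

lemma Hi_apply: "Hi *v x = (\<Sum>b\<in>B. ((b \<bullet> x) / l b) *\<^sub>R b)"
proof -
  let ?z = "(\<Sum>b\<in>B. ((b \<bullet> x) / l b) *\<^sub>R b)"
  have "H *v ?z = (\<Sum>b\<in>B. (l b * ((b \<bullet> x) / l b)) *\<^sub>R b)"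
    using es_apply[OF E, of ?z] by (simp add: es_coeff[OF E])
  also have "\<dots> = (\<Sum>b\<in>B. (b \<bullet> x) *\<^sub>R b)"
    by (rule sum.cong) (auto dest: lpos)
  also have "\<dots> = x" by (rule es_exp'[OF E])
  finally have "Hi *v (H *v ?z) = Hi *v x" by simp
  thus ?thesis by (simp add: matrix_vector_mul_assoc Hi2)
qed

lemma Hi_sym: "x \<bullet> (Hi *v y) = (Hi *v x) \<bullet> y"
proof -
  have "x \<bullet> (Hi *v y) = (\<Sum>b\<in>B. (b \<bullet> x) *\<^sub>R b) \<bullet> (\<Sum>b\<in>B. ((b \<bullet> y) / l b) *\<^sub>R b)"
    by (simp only: es_exp'[OF E] Hi_apply)
  also have "\<dots> = (\<Sum>b\<in>B. ((b \<bullet> x) / l b) *\<^sub>R b) \<bullet> (\<Sum>b\<in>B. (b \<bullet> y) *\<^sub>R b)"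
    by (simp add: es_inner_sum[OF E] mult_ac)
  also have "\<dots> = (Hi *v x) \<bullet> y" by (simp only: es_exp'[OF E] Hi_apply)
  finally show ?thesis .
qed

lemma g_sym: "b \<bullet> (G *v c) = c \<bullet> (G *v b)"
  using sym_inner[OF Gsym, of b c] by (simp add: inner_commute)

lemma D_sym: "transpose (Hi ** G ** Hi) = Hi ** G ** Hi"
proof (rule inner_eq_sym_transpose)
  fix x y
  have "x \<bullet> ((Hi ** G ** Hi) *v y) = (Hi *v x) \<bullet> (G *v (Hi *v y))"
    by (simp add: matrix_vector_mul_assoc[symmetric] matrix_mul_assoc[symmetric] Hi_sym)
  also have "\<dots> = (G *v (Hi *v x)) \<bullet> (Hi *v y)" by (rule sym_inner[OF Gsym])
  also have "\<dots> = y \<bullet> (Hi *v (G *v (Hi *v x)))" by (simp add: Hi_sym inner_commute)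
  also have "\<dots> = y \<bullet> ((Hi ** G ** Hi) *v x)" by (simp add: matrix_vector_mul_assoc matrix_mul_assoc)
  finally show "x \<bullet> ((Hi ** G ** Hi) *v y) = y \<bullet> ((Hi ** G ** Hi) *v x)" .
qed

definition K where "K b c = \<delta> / (l b + l c - 1 / \<delta>) - 1 / (l b * l c)"

lemma Ksym: "K c b = K b c"
  unfolding K_def by (simp add: add.commute mult.commute)

definition Sg where "Sg = (\<Sum>b\<in>B. \<Sum>c\<in>B. (\<delta> / (l b + l c - 1 / \<delta>)) *\<^sub>R (outer b ** G ** outer c))"

lemma Sg_form: "x \<bullet> (Sg *v y) = (\<Sum>b\<in>B. \<Sum>c\<in>B. (\<delta> / (l b + l c - 1 / \<delta>)) * (b \<bullet> x) * (c \<bullet> y) * (b \<bullet> (G *v c)))"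
  unfolding Sg_def by (simp add: sum_mv scaleR_mv T_mv inner_sum_right mult_ac inner_commute)

lemma D_form: "x \<bullet> ((Hi ** G ** Hi) *v y) = (\<Sum>b\<in>B. \<Sum>c\<in>B. (1 / (l b * l c)) * (b \<bullet> x) * (c \<bullet> y) * (b \<bullet> (G *v c)))"
proof -
  have "x \<bullet> ((Hi ** G ** Hi) *v y) = x \<bullet> (Hi *v (G *v (Hi *v y)))"
    by (simp add: matrix_vector_mul_assoc matrix_mul_assoc)
  also have "\<dots> = (Hi *v x) \<bullet> (G *v (Hi *v y))" by (rule Hi_sym)
  also have "\<dots> = (\<Sum>b\<in>B. \<Sum>c\<in>B. (1 / (l b * l c)) * (b \<bullet> x) * (c \<bullet> y) * (b \<bullet> (G *v c)))"
    unfolding Hi_apply bilin by (simp add: mult_ac)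
  finally show ?thesis .
qed

lemma E_form: "x \<bullet> ((Sg - Hi ** G ** Hi) *v y) = (\<Sum>b\<in>B. \<Sum>c\<in>B. K b c * (b \<bullet> x) * (c \<bullet> y) * (b \<bullet> (G *v c)))"
  by (simp add: matrix_vector_mult_diff_rdistrib inner_diff_right Sg_form D_form K_def
      sum_subtractf[symmetric] left_diff_distrib)

lemma E_sym: "transpose (Sg - Hi ** G ** Hi) = Sg - Hi ** G ** Hi"
proof (rule inner_eq_sym_transpose)
  fix x y
  have "x \<bullet> ((Sg - Hi ** G ** Hi) *v y) = (\<Sum>c\<in>B. \<Sum>b\<in>B. K c b * (c \<bullet> x) * (b \<bullet> y) * (c \<bullet> (G *v b)))"
    by (simp add: E_form)
  also have "\<dots> = (\<Sum>b\<in>B. \<Sum>c\<in>B. K c b * (c \<bullet> x) * (b \<bullet> y) * (c \<bullet> (G *v b)))"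
    by (rule sum.swap)
  also have "\<dots> = (\<Sum>b\<in>B. \<Sum>c\<in>B. K b c * (b \<bullet> y) * (c \<bullet> x) * (b \<bullet> (G *v c)))"
    by (intro sum.cong refl) (simp add: Ksym g_sym mult_ac)
  also have "\<dots> = y \<bullet> ((Sg - Hi ** G ** Hi) *v x)" by (simp add: E_form)
  finally show "x \<bullet> ((Sg - Hi ** G ** Hi) *v y) = y \<bullet> ((Sg - Hi ** G ** Hi) *v x)" .
qed

definition p where "p b = \<delta> - 1 / l b"
definition \<beta> where "\<beta> b = \<delta> * l b - 1 / 2"

lemma beta_pos: "b \<in> B \<Longrightarrow> \<beta> b > 0"
  using pos[of b] unfolding \<beta>_def by simp

lemma K_eq: "b \<in> B \<Longrightarrow> c \<in> B \<Longrightarrow> K b c = p b * p c / (\<beta> b + \<beta> c)"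
proof -
  assume b: "b \<in> B" and c: "c \<in> B"
  have lb: "l b > 0" "l c > 0" using lpos b c by auto
  have den: "l b + l c - 1 / \<delta> > 0" using pos[OF b] pos[OF c] d lb
    by (smt (verit, best) divide_less_eq mult.commute)
  have den2: "\<beta> b + \<beta> c > 0" using beta_pos b c by (simp add: add_pos_pos)
  have e1: "l b + l c - 1 / \<delta> = (\<beta> b + \<beta> c) / \<delta>" unfolding \<beta>_def using d
    by (simp add: field_simps)
  show ?thesis unfolding K_def e1 p_def using d lb den2
    unfolding \<beta>_def by (simp add: field_simps)
qed

lemma Q_form: "x \<bullet> ((Sg - Hi ** G ** Hi) *v x) =
  (\<Sum>b\<in>B. \<Sum>c\<in>B. (p b * (b \<bullet> x) * (p c * (c \<bullet> x)) * (b \<bullet> (G *v c))) / (\<beta> b + \<beta> c))"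
  unfolding E_form by (intro sum.cong refl) (simp add: K_eq)

lemma Q_integral: "((\<lambda>s. (\<Sum>b\<in>B. (p b * (b \<bullet> x) * exp (- \<beta> b * s)) *\<^sub>R b) \<bullet>
      (G *v (\<Sum>b\<in>B. (p b * (b \<bullet> x) * exp (- \<beta> b * s)) *\<^sub>R b))) has_integral
   x \<bullet> ((Sg - Hi ** G ** Hi) *v x)) {0..}"
proof -
  have f: "(\<lambda>s. (\<Sum>b\<in>B. (p b * (b \<bullet> x) * exp (- \<beta> b * s)) *\<^sub>R b) \<bullet>
      (G *v (\<Sum>b\<in>B. (p b * (b \<bullet> x) * exp (- \<beta> b * s)) *\<^sub>R b))) =
    (\<lambda>s. \<Sum>b\<in>B. \<Sum>c\<in>B. (p b * (b \<bullet> x) * (p c * (c \<bullet> x)) * (b \<bullet> (G *v c))) * exp (- (\<beta> b + \<beta> c) * s))"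
    unfolding bilin by (intro ext sum.cong refl) (simp add: exp_add[symmetric] algebra_simps)
  show ?thesis unfolding f Q_form
  proof (intro has_integral_sum es_fin[OF E])
    fix b c assume "b \<in> B" "c \<in> B"
    hence bc: "\<beta> b + \<beta> c > 0" using beta_pos by (simp add: add_pos_pos)
    show "((\<lambda>s. (p b * (b \<bullet> x) * (p c * (c \<bullet> x)) * (b \<bullet> (G *v c))) * exp (- (\<beta> b + \<beta> c) * s)) has_integral
        (p b * (b \<bullet> x) * (p c * (c \<bullet> x)) * (b \<bullet> (G *v c))) / (\<beta> b + \<beta> c)) {0..}"
      using has_integral_mult_right[OF has_integral_exp_minus_to_infinity[OF bc, of 0]] by simp
  qed
qed

lemma Q_nonneg: "0 \<le> x \<bullet> ((Sg - Hi ** G ** Hi) *v x)"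
  using Q_integral by (rule has_integral_nonneg) (rule Gpsd)

lemma frac_mono:
  fixes a M :: real assumes "1 < a" "a \<le> M"
  shows "(a - 1)^2 / (2 * a - 1) \<le> (M - 1)^2 / (2 * M - 1)"
proof -
  have f: "(M - 1)^2 * (2 * a - 1) - (a - 1)^2 * (2 * M - 1) = (M - a) * (a * (M - 1) + M * (a - 1))"
    by (simp add: algebra_simps power2_eq_square)
  have "0 \<le> (M - a) * (a * (M - 1) + M * (a - 1))" using assms by simp
  hence "(a - 1)^2 * (2 * M - 1) \<le> (M - 1)^2 * (2 * a - 1)" using f by linarith
  thus ?thesis using assms by (simp add: divide_le_eq le_divide_eq mult.commute field_simps)
qed

lemma Q_bound:
  assumes aM: "\<And>b. b \<in> B \<Longrightarrow> \<delta> * l b \<le> aM"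
  shows "x \<bullet> ((Sg - Hi ** G ** Hi) *v x) \<le> (aM - 1)^2 / (2 * aM - 1) * opnorm (Hi ** G ** Hi) * (x \<bullet> x)"
proof -
  obtain BD where BD: "espec (Hi ** G ** Hi) BD" using spectral'[OF D_sym] by blast
  let ?D = "Hi ** G ** Hi"
  let ?\<rho> = "opnorm ?D"
  have \<rho>0: "0 \<le> ?\<rho>" by (rule es_opnorm_nonneg[OF BD])
  let ?w = "\<lambda>s. (\<Sum>b\<in>B. (p b * (b \<bullet> x) * exp (- \<beta> b * s)) *\<^sub>R b)"
  let ?\<psi> = "\<lambda>s. ?\<rho> * (\<Sum>b\<in>B. (l b * p b * (b \<bullet> x))^2 * exp (- (2 * \<beta> b) * s))"
  have int2: "(?\<psi> has_integral ?\<rho> * (\<Sum>b\<in>B. (l b * p b * (b \<bullet> x))^2 / (2 * \<beta> b))) {0..}"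
  proof (intro has_integral_mult_right has_integral_sum es_fin[OF E])
    fix b assume "b \<in> B"
    hence bc: "2 * \<beta> b > 0" using beta_pos by simp
    show "((\<lambda>s. (l b * p b * (b \<bullet> x))^2 * exp (- (2 * \<beta> b) * s)) has_integral
        (l b * p b * (b \<bullet> x))^2 / (2 * \<beta> b)) {0..}"
      using has_integral_mult_right[OF has_integral_exp_minus_to_infinity[OF bc, of 0]] by simp
  qed
  have le: "?w s \<bullet> (G *v ?w s) \<le> ?\<psi> s" for s
  proof -
    let ?u = "(\<Sum>b\<in>B. (l b * (p b * (b \<bullet> x) * exp (- \<beta> b * s))) *\<^sub>R b)"
    have wu: "?w s = Hi *v ?u"
      unfolding Hi_apply
    proof (rule sum.cong[OF refl])
      fix b assume b: "b \<in> B"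
      hence "l b \<noteq> 0" using lpos by force
      thus "(p b * (b \<bullet> x) * exp (- \<beta> b * s)) *\<^sub>R b = ((b \<bullet> ?u) / l b) *\<^sub>R b"
        by (simp add: es_coeff[OF E b])
    qed
    have "?w s \<bullet> (G *v ?w s) = ?u \<bullet> (?D *v ?u)"
      unfolding wu by (simp add: matrix_vector_mul_assoc[symmetric] matrix_mul_assoc[symmetric] Hi_sym)
    also have "\<dots> \<le> ?\<rho> * (?u \<bullet> ?u)" by (rule es_rayleigh[OF BD])
    also have "?u \<bullet> ?u = (\<Sum>b\<in>B. (l b * p b * (b \<bullet> x))^2 * exp (- (2 * \<beta> b) * s))"
      unfolding es_inner_sum[OF E]
      by (intro sum.cong refl) (simp add: power2_eq_square exp_add[symmetric] algebra_simps)
    finally show ?thesis by simp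
  qed
  have "x \<bullet> ((Sg - Hi ** G ** Hi) *v x) \<le> ?\<rho> * (\<Sum>b\<in>B. (l b * p b * (b \<bullet> x))^2 / (2 * \<beta> b))"
    using Q_integral int2 le by (rule has_integral_le)
  also have "\<dots> \<le> ?\<rho> * (\<Sum>b\<in>B. (aM - 1)^2 / (2 * aM - 1) * (b \<bullet> x)^2)"
  proof (intro mult_left_mono sum_mono \<rho>0)
    fix b assume b: "b \<in> B"
    have e: "(l b * p b * (b \<bullet> x))^2 / (2 * \<beta> b) = (\<delta> * l b - 1)^2 / (2 * (\<delta> * l b) - 1) * (b \<bullet> x)^2"
    proof -
      have lp: "l b * p b = \<delta> * l b - 1" unfolding p_def using lpos[OF b] by (simp add: field_simps)
      have tb: "2 * \<beta> b = 2 * (\<delta> * l b) - 1" unfolding \<beta>_def by simp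
      show ?thesis unfolding lp tb by (simp add: power_mult_distrib)
    qed
    show "(l b * p b * (b \<bullet> x))^2 / (2 * \<beta> b) \<le> (aM - 1)^2 / (2 * aM - 1) * (b \<bullet> x)^2"
      unfolding e by (intro mult_right_mono frac_mono pos b aM) simp
  qed
  also have "\<dots> = ?\<rho> * ((aM - 1)^2 / (2 * aM - 1) * (\<Sum>b\<in>B. (b \<bullet> x)^2))"
    by (simp only: sum_distrib_left)
  also have "\<dots> = (aM - 1)^2 / (2 * aM - 1) * ?\<rho> * (x \<bullet> x)"
    by (simp only: es_parseval[OF E, of x, symmetric] mult_ac)
  finally show ?thesis .
qed

end




theorem proposition3:
  fixes \<Phi> :: "real^'n \<Rightarrow> real" and \<theta>s :: "real^'n"
    and H \<Gamma> :: "real^'n^'n" and \<delta> :: real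
  assumes unique_min: "\<forall>\<theta>. \<theta> \<noteq> \<theta>s \<longrightarrow> \<Phi> \<theta>s < \<Phi> \<theta>"
    and C2: "C2_near_with_hessian \<Phi> \<theta>s H"
    and H_pd: "posdef H"
    and \<Gamma>_psd: "psd \<Gamma>"
    and \<delta>: "\<delta> > 1 / Min (eigenvalues H)"
  defines "\<Sigma> \<equiv> \<delta> *\<^sub>R integral {0..}
             (\<lambda>t. exp (t / \<delta>) *\<^sub>R (mexp (- (t *\<^sub>R H)) ** \<Gamma> ** mexp (- (t *\<^sub>R H))))"
    and "\<Delta> \<equiv> matrix_inv H ** \<Gamma> ** matrix_inv H"
  shows "psd (\<Sigma> - \<Delta>)
    \<and> opnorm (\<Sigma> - \<Delta>) \<le> (\<delta> * Max (eigenvalues H) - 1)^2 / (2 * \<delta> * Max (eigenvalues H) - 1) * opnorm \<Delta>"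
proof -
  have Hsym: "transpose H = H" and Hpos: "\<And>x. x \<noteq> 0 \<Longrightarrow> 0 < x \<bullet> (H *v x)"
    using H_pd unfolding posdef_def by auto
  have Gsym: "transpose \<Gamma> = \<Gamma>" and Gpsd: "\<And>x. 0 \<le> x \<bullet> (\<Gamma> *v x)"
    using \<Gamma>_psd unfolding psd_def by auto
  obtain B where E: "espec H B" using spectral'[OF Hsym] by blast
  have fin: "finite B" and ne: "B \<noteq> {}" using es_fin[OF E] es_ne[OF E] by auto
  have ev: "eigenvalues H = (\<lambda>b. b \<bullet> (H *v b)) ` B" by (rule es_eigenvalues[OF E])
  have lp: "0 < b \<bullet> (H *v b)" if "b \<in> B" for b
    using Hpos es_norm[OF E that] by (metis norm_zero zero_neq_one)
  have minpos: "0 < Min (eigenvalues H)" unfolding ev using fin ne lp by simp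
  have d: "\<delta> > 0" using \<delta> minpos by (smt (verit) divide_pos_pos)
  have dmin: "1 < \<delta> * Min (eigenvalues H)" using \<delta> minpos by (simp add: divide_less_eq mult.commute)
  have pos: "1 < \<delta> * (b \<bullet> (H *v b))" if b: "b \<in> B" for b
  proof -
    have "Min (eigenvalues H) \<le> b \<bullet> (H *v b)" unfolding ev using fin b by simp
    hence "\<delta> * Min (eigenvalues H) \<le> \<delta> * (b \<bullet> (H *v b))" using d by simp
    thus ?thesis using dmin by linarith
  qed
  have aM: "\<delta> * (b \<bullet> (H *v b)) \<le> \<delta> * Max (eigenvalues H)" if b: "b \<in> B" for b
  proof -
    have "b \<bullet> (H *v b) \<le> Max (eigenvalues H)" unfolding ev using fin b by simp
    thus ?thesis using d by simp
  qed
  define Hi0 where "Hi0 = (\<Sum>b\<in>B. (1 / (b \<bullet> (H *v b))) *\<^sub>R outer b)"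
  have Hi0_1: "H ** Hi0 = mat 1" unfolding matrix_eq
  proof
    fix x
    have "(H ** Hi0) *v x = H *v (\<Sum>b\<in>B. (1 / (b \<bullet> (H *v b)) * (b \<bullet> x)) *\<^sub>R b)"
      unfolding Hi0_def by (simp add: matrix_vector_mul_assoc[symmetric] es_sum_outer_mv[OF E])
    also have "\<dots> = (\<Sum>b\<in>B. ((b \<bullet> (H *v b)) * (1 / (b \<bullet> (H *v b)) * (b \<bullet> x))) *\<^sub>R b)"
      using es_apply[OF E, of "\<Sum>b\<in>B. (1 / (b \<bullet> (H *v b)) * (b \<bullet> x)) *\<^sub>R b"] by (simp add: es_coeff[OF E])
    also have "\<dots> = (\<Sum>b\<in>B. (b \<bullet> x) *\<^sub>R b)"
      by (rule sum.cong) (auto dest: lp)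
    also have "\<dots> = x" by (rule es_exp'[OF E])
    finally show "(H ** Hi0) *v x = mat 1 *v x" by simp
  qed
  have Hi0_2: "Hi0 ** H = mat 1" unfolding matrix_eq
  proof
    fix x
    have "(Hi0 ** H) *v x = (\<Sum>b\<in>B. (1 / (b \<bullet> (H *v b)) * (b \<bullet> (H *v x))) *\<^sub>R b)"
      unfolding Hi0_def by (simp add: matrix_vector_mul_assoc[symmetric] es_sum_outer_mv[OF E])
    also have "\<dots> = (\<Sum>b\<in>B. (b \<bullet> x) *\<^sub>R b)"
    proof (rule sum.cong[OF refl])
      fix b assume b: "b \<in> B"
      have "b \<bullet> (H *v x) = (b \<bullet> (H *v b)) * (b \<bullet> x)"
        using es_apply[OF E, of x] es_coeff[OF E b] by simp
      thus "(1 / (b \<bullet> (H *v b)) * (b \<bullet> (H *v x))) *\<^sub>R b = (b \<bullet> x) *\<^sub>R b" using lp[OF b] by simp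
    qed
    also have "\<dots> = x" by (rule es_exp'[OF E])
    finally show "(Hi0 ** H) *v x = mat 1 *v x" by simp
  qed
  have inv: "H ** matrix_inv H = mat 1 \<and> matrix_inv H ** H = mat 1"
    unfolding matrix_inv_def by (rule someI[of _ Hi0]) (use Hi0_1 Hi0_2 in blast)
  have Hi1: "H ** matrix_inv H = mat 1" and Hi2: "matrix_inv H ** H = mat 1" using inv by auto
  have SgE: "\<Sigma> = Sg H \<Gamma> B \<delta>"
  proof -
    have "integral {0..} (\<lambda>t. exp (t / \<delta>) *\<^sub>R (mexp (- (t *\<^sub>R H)) ** \<Gamma> ** mexp (- (t *\<^sub>R H)))) =
      (\<Sum>b\<in>B. \<Sum>c\<in>B. (1 / ((b \<bullet> (H *v b)) + (c \<bullet> (H *v c)) - 1 / \<delta>)) *\<^sub>R (outer b ** \<Gamma> ** outer c))"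
      by (rule integral_unique[OF es_integral[OF E pos d]])
    thus ?thesis unfolding \<Sigma>_def by (simp add: Sg_def[OF E Gsym Gpsd pos d Hi1 Hi2] scaleR_sum_right)
  qed
  note ctx = E Gsym Gpsd pos d Hi1 Hi2
  have sym: "transpose (\<Sigma> - \<Delta>) = \<Sigma> - \<Delta>"
    unfolding SgE \<Delta>_def by (rule E_sym[OF ctx])
  have nn: "0 \<le> x \<bullet> ((\<Sigma> - \<Delta>) *v x)" for x
    unfolding SgE \<Delta>_def by (rule Q_nonneg[OF ctx])
  have psdE: "psd (\<Sigma> - \<Delta>)" unfolding psd_def using sym nn by blast
  obtain BE where BE: "espec (\<Sigma> - \<Delta>) BE" using spectral'[OF sym] by blast
  obtain u where u: "u \<in> BE" "norm u = 1" "opnorm (\<Sigma> - \<Delta>) = \<bar>u \<bullet> ((\<Sigma> - \<Delta>) *v u)\<bar>"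
    using es_opnorm_attained[OF BE] by blast
  have "opnorm (\<Sigma> - \<Delta>) = u \<bullet> ((\<Sigma> - \<Delta>) *v u)" using u(3) nn[of u] by simp
  also have "\<dots> \<le> (\<delta> * Max (eigenvalues H) - 1)^2 / (2 * (\<delta> * Max (eigenvalues H)) - 1) * opnorm \<Delta> * (u \<bullet> u)"
    unfolding SgE \<Delta>_def by (rule Q_bound[OF ctx aM])
  also have "u \<bullet> u = 1" using u(2) by (simp add: dot_square_norm)
  finally show ?thesis using psdE by (simp add: mult.assoc)
qed


end
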